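(* Let $\mathcal{H}$ be a Hilbert space, $h\in\mathcal{H}$, and $\mathcal{L}$ a nonempty set of closed subspaces of $\mathcal{H}$. Define $\mathcal{C}: 2^{\mathcal{L}}\to 2^{\mathcal{L}}$ by: for $A\subseteq\mathcal{L}$ and $b\in\mathcal{L}$, $b\in\mathcal{C}(A)$ iff $A^*_p(h)\in b$. Then $\mathcal{C}$ is an L-logics, i.e. it satisfies Inclusion ($A\subseteq\mathcal{C}(A)$ for all $A\subseteq\mathcal{L}$) and Loop: for every $n\ge 1$ and all $A_0,\dots,A_{n-1}\subseteq\mathcal{L}$, if $A_i\subseteq\mathcal{C}(A_{i+1})$ for every $i=0,\dots,n-1$ (indices modulo $n$), then $\mathcal{C}(A_0)=\mathcal{C}(A_1)$.
   Context: For $A\subseteq\mathcal{L}$, $A^* = \bigcap_{a\in A} a$ (a closed subspace of $\mathcal{H}$; $A^*=\mathcal{H}$ when $A=\emptyset$), and $A^*_p$ denotes the orthogonal projection onto $A^*$, so $A^*_p(h)$ is the element of $A^*$ closest to $h$. *)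

theory Defs
  imports "HOL-Analysis.Analysis"
begin

definition closed_subspace :: "'a::{real_inner,complete_space} set \<Rightarrow> bool" where
  "closed_subspace S \<longleftrightarrow> subspace S \<and> closed S"

text \<open>A star: the intersection of A (the whole space for A empty).\<close>
definition star :: "'a set set \<Rightarrow> 'a set" where
  "star A = \<Inter> A"

definition proj :: "'a::{real_inner,complete_space} set \<Rightarrow> 'a \<Rightarrow> 'a" where
  "proj S h = (THE x. x \<in> S \<and> (\<forall>y\<in>S. dist h x \<le> dist h y))"

definition L_logic :: "'b set \<Rightarrow> ('b set \<Rightarrow> 'b set) \<Rightarrow> bool" where
  "L_logic L C \<longleftrightarrow>
     (\<forall>A. A \<subseteq> L \<longrightarrow> A \<subseteq> C A) \<and>
     (\<forall>n::nat. n \<ge> 1 \<longrightarrow> (\<forall>As :: nat \<Rightarrow> 'b set.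
        (\<forall>i<n. As i \<subseteq> L) \<and> (\<forall>i<n. As i \<subseteq> C (As ((i + 1) mod n)))
        \<longrightarrow> C (As 0) = C (As (1 mod n))))"

end

theory Submission
  imports Defs
begin

lemma closest_exists_hilbert:
  fixes S :: "'a::{real_inner,complete_space} set"
  assumes cv: "convex S" and cl: "closed S" and ne: "S \<noteq> {}"
  shows "\<exists>x\<in>S. \<forall>y\<in>S. dist h x \<le> dist h y"
proof -
  define d where "d = Inf (dist h ` S)"
  have bdd: "bdd_below (dist h ` S)" by (rule bdd_belowI[of _ 0]) auto
  have d_le: "\<And>y. y \<in> S \<Longrightarrow> d \<le> dist h y"
    unfolding d_def by (rule cInf_lower) (use bdd in auto)
  have d0: "0 \<le> d" unfolding d_def by (rule cInf_greatest) (use ne in auto)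
  have "\<forall>n::nat. \<exists>y. y \<in> S \<and> (dist h y)^2 < d^2 + 1/(real n+1)"
  proof
    fix n :: nat
    have "d < sqrt (d^2 + 1/(real n+1))"
      using d0 by (metis add_pos_pos divide_pos_pos le_less_trans less_add_same_cancel1 of_nat_0_le_iff real_less_rsqrt zero_less_one) 
    then have "Inf (dist h ` S) < sqrt (d^2 + 1/(real n+1))" by (simp add: d_def)
    then obtain z where "z \<in> dist h ` S" "z < sqrt (d^2 + 1/(real n+1))"
      using cInf_lessD[of "dist h ` S" "sqrt (d^2 + 1/(real n+1))"] ne by blast
    then obtain y where y: "y \<in> S" "dist h y < sqrt (d^2 + 1/(real n+1))" by auto
    then have "(dist h y)^2 < d^2 + 1/(real n+1)"
    proof -
      have "(dist h y)^2 < (sqrt (d^2 + 1/(real n+1)))^2"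
        using y(2) by (intro power_strict_mono) auto
      also have "\<dots> = d^2 + 1/(real n+1)" by (intro real_sqrt_pow2) (simp add: add_nonneg_nonneg)
      finally show ?thesis .
    qed
    with y show "\<exists>y. y \<in> S \<and> (dist h y)^2 < d^2 + 1/(real n+1)" by blast
  qed
  then obtain y where yS: "\<And>n. y n \<in> S" and yd: "\<And>n. (dist h (y n))^2 < d^2 + 1/(real n+1)"
    by metis
  have key: "(norm (y m - y n))^2 \<le> 2/(real m+1) + 2/(real n+1)" for m n
  proof -
    define a where "a = h - y m"
    define b where "b = h - y n"
    have par: "(norm (a+b))^2 + (norm (a-b))^2 = 2*(norm a)^2 + 2*(norm b)^2"
      by (simp add: power2_norm_eq_inner inner_add inner_diff algebra_simps inner_commute)
    define mid where "mid = (1/2) *\<^sub>R y m + (1/2) *\<^sub>R y n"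
    have midS: "mid \<in> S" unfolding mid_def using cv yS by (intro convexD) auto
    have "a + b = 2 *\<^sub>R (h - mid)" unfolding a_def b_def mid_def by (simp add: algebra_simps scaleR_2)
    then have "norm (a+b) = 2 * dist h mid" by (simp add: dist_norm)
    moreover have "d \<le> dist h mid" using d_le midS by auto
    ultimately have "4 * d^2 \<le> (norm (a+b))^2"
      using d0 by (simp add: power_mult_distrib power_mono)
    moreover have "norm (a - b) = norm (y m - y n)" unfolding a_def b_def by (simp add: norm_minus_commute)
    moreover have "(norm a)^2 < d^2 + 1/(real m+1)" using yd[of m] by (simp add: a_def dist_norm)
    moreover have "(norm b)^2 < d^2 + 1/(real n+1)" using yd[of n] by (simp add: b_def dist_norm)
    moreover have "2/(real m+1) = 2*(1/(real m+1))" "2/(real n+1) = 2*(1/(real n+1))" by simp_all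
    ultimately have "(norm (a - b))^2 \<le> 2*(1/(real m+1)) + 2*(1/(real n+1))" using par by linarith
    then show ?thesis using \<open>norm (a - b) = norm (y m - y n)\<close> by simp
  qed
  have "Cauchy y"
  proof (rule CauchyI)
    fix e :: real assume e: "0 < e"
    obtain M where M: "inverse (real (Suc M)) < e^2/4"
      using reals_Archimedean[of "e^2/4"] e by auto
    show "\<exists>M. \<forall>m\<ge>M. \<forall>n\<ge>M. norm (y m - y n) < e"
    proof (intro exI allI impI)
      fix m n assume mn: "M \<le> m" "M \<le> n"
      have "inverse (real m+1) \<le> inverse (real M+1)" using mn by (intro le_imp_inverse_le) auto
      moreover have "inverse (real n+1) \<le> inverse (real M+1)" using mn by (intro le_imp_inverse_le) auto
      moreover have "2/(real m+1) = 2*inverse (real m+1)" "2/(real n+1) = 2*inverse (real n+1)"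
        by (simp_all add: divide_inverse)
      moreover have "inverse (real (Suc M)) = inverse (real M+1)" by simp
      ultimately have "(norm (y m - y n))^2 < e^2" using key[of m n] M by linarith
      then show "norm (y m - y n) < e" using e by (simp add: power2_less_imp_less)
    qed
  qed
  then obtain x where lim: "y \<longlonglongrightarrow> x" using Cauchy_convergent_iff convergent_def by blast
  have xS: "x \<in> S" using closed_sequentially[OF cl] yS lim by blast
  have l1: "(\<lambda>n. (dist h (y n))^2) \<longlonglongrightarrow> (dist h x)^2"
    by (intro tendsto_intros lim)
  have eq: "(\<lambda>n. d^2 + 1/(real n+1)) = (\<lambda>n. d^2 + inverse (real (Suc n)))"
    by (simp add: inverse_eq_divide add.commute)
  have l2: "(\<lambda>n. d^2 + 1/(real n+1)) \<longlonglongrightarrow> d^2"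
    unfolding eq by (rule LIMSEQ_inverse_real_of_nat_add)
  have "(dist h x)^2 \<le> d^2"
  proof (rule LIMSEQ_le[OF l1 l2])
    show "\<exists>N. \<forall>n\<ge>N. (dist h (y n))^2 \<le> d^2 + 1/(real n+1)"
      using yd less_imp_le by (intro exI[of _ 0] allI impI) fast
  qed
  then have "dist h x \<le> d" by (rule power2_le_imp_le[OF _ d0])
  then show ?thesis using xS d_le order_trans by blast
qed

lemma proj_props:
  fixes S :: "'a::{real_inner,complete_space} set"
  assumes cv: "convex S" and cl: "closed S" and ne: "S \<noteq> {}"
  shows "proj S h \<in> S \<and> (\<forall>y\<in>S. dist h (proj S h) \<le> dist h y)"
proof -
  obtain x where x: "x \<in> S" "\<forall>y\<in>S. dist h x \<le> dist h y"
    using closest_exists_hilbert[OF assms] by blast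
  have "\<exists>!x. x \<in> S \<and> (\<forall>y\<in>S. dist h x \<le> dist h y)"
    using x any_closest_point_unique[OF cv cl] by blast
  then show ?thesis unfolding proj_def by (rule theI')
qed

lemma proj_unique:
  fixes S :: "'a::{real_inner,complete_space} set"
  assumes cv: "convex S" and cl: "closed S" and x: "x \<in> S" "\<forall>y\<in>S. dist h x \<le> dist h y"
  shows "proj S h = x"
  using proj_props[OF cv cl] x any_closest_point_unique[OF cv cl] by blast

lemma star_props:
  fixes A :: "'a::{real_inner,complete_space} set set"
  assumes "\<forall>b\<in>A. closed_subspace b"
  shows "convex (star A)" "closed (star A)" "star A \<noteq> {}"
proof -
  show "convex (star A)" unfolding star_def
    using assms by (intro convex_Inter) (auto simp: closed_subspace_def subspace_imp_convex)
  show "closed (star A)" unfolding star_def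
    using assms by (intro closed_Inter) (auto simp: closed_subspace_def)
  have "0 \<in> star A" unfolding star_def
    using assms by (auto simp: closed_subspace_def subspace_0)
  then show "star A \<noteq> {}" by auto
qed

theorem theorem9:
  fixes h :: "'a::{real_inner,complete_space}"
    and L :: "'a set set"
  assumes "L \<noteq> {}"
    and "\<forall>b\<in>L. closed_subspace b"
  shows "L_logic L (\<lambda>A. {b \<in> L. proj (star A) h \<in> b})"
proof -
  have SP: "A \<subseteq> L \<Longrightarrow> convex (star A) \<and> closed (star A) \<and> star A \<noteq> {}" for A
    using star_props[of A] assms(2) by blast
  have PP: "A \<subseteq> L \<Longrightarrow> proj (star A) h \<in> star A \<and> (\<forall>y\<in>star A. dist h (proj (star A) h) \<le> dist h y)" for A
    using SP[of A] proj_props by blast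
  show ?thesis unfolding L_logic_def
  proof (intro conjI allI impI)
    fix A assume A: "A \<subseteq> L"
    show "A \<subseteq> {b \<in> L. proj (star A) h \<in> b}"
      using PP[OF A] A by (auto simp: star_def)
  next
    fix n :: nat and As :: "nat \<Rightarrow> 'a set set"
    assume n: "1 \<le> n"
    assume H: "(\<forall>i<n. As i \<subseteq> L) \<and> (\<forall>i<n. As i \<subseteq> {b \<in> L. proj (star (As ((i + 1) mod n))) h \<in> b})"
    define p where "p i = proj (star (As i)) h" for i
    define D where "D i = dist h (p i)" for i
    have inS: "p ((i+1) mod n) \<in> star (As i)" if "i < n" for i
      using H that unfolding p_def star_def by blast
    have step: "D i \<le> D ((i+1) mod n)" if "i < n" for i
      using PP[of "As i"] H inS[OF that] that unfolding D_def p_def by blast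
    show "{b \<in> L. proj (star (As 0)) h \<in> b} = {b \<in> L. proj (star (As (1 mod n))) h \<in> b}"
    proof (cases "n = 1")
      case True then show ?thesis by simp
    next
      case False
      then have n2: "2 \<le> n" using n by simp
      have 1: "1 mod n = 1" using n2 by simp
      have chain: "1 \<le> k \<longrightarrow> k \<le> n \<longrightarrow> D 1 \<le> D (k mod n)" for k
      proof (induction k)
        case 0 then show ?case by simp
      next
        case (Suc k)
        show ?case
        proof (cases "k = 0")
          case True then show ?thesis using 1 by simp
        next
          case False
          show ?thesis
          proof (intro impI)
            assume "Suc k \<le> n"
            then have kn: "k < n" by simp
            then have "D 1 \<le> D k" using Suc.IH False by simp
            also have "\<dots> \<le> D (Suc k mod n)" using step[OF kn] by simp
            finally show "D 1 \<le> D (Suc k mod n)" .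
          qed
        qed
      qed
      have "D 1 \<le> D 0" using chain[of n] n by simp
      moreover have "p 1 \<in> star (As 0)" using inS[of 0] n2 1 by simp
      moreover have A0: "As 0 \<subseteq> L" using H n by auto
      ultimately have "\<forall>y\<in>star (As 0). dist h (p 1) \<le> dist h y"
        using PP[OF A0] unfolding D_def p_def by fastforce
      then have "p 0 = p 1"
        using proj_unique[of "star (As 0)" "p 1" h] SP[OF A0] \<open>p 1 \<in> star (As 0)\<close>
        unfolding p_def by simp
      then show ?thesis using 1 unfolding p_def by simp
    qed
  qed
qed

end
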